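(* Let $n\ge 1$ and $N=\binom{2n}{n}$. There exists a listing $S_0,S_1,\ldots,S_{N-1}$ of all $n$-element subsets of $\{1,2,\ldots,2n\}$ such that (i) $S_{i+N/2}=\{1,\ldots,2n\}\setminus S_i$ for all $0\le i<N/2$, and (ii) for every $i$ (indices taken modulo $N$), $S_{i+1}=(S_i\setminus\{a\})\cup\{b\}$ for some $a\in S_i$, $b\notin S_i$, such that either every integer strictly between $a$ and $b$ belongs to $S_i$, or no integer strictly between $a$ and $b$ belongs to $S_i$.
   Context: Condition (ii) is the "complementary strong minimal change property": in terms of incidence vectors, consecutive vectors differ in exactly two bit positions, and the bits strictly between these two positions are all $1$ or all $0$. Condition (i) says the code is complementary. *)

theory Defs
  imports Main
begin

definition strong_min_change :: "nat set \<Rightarrow> nat set \<Rightarrow> bool" where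
  "strong_min_change S T \<longleftrightarrow>
     (\<exists>a b. a \<in> S \<and> b \<notin> S \<and> T = (S - {a}) \<union> {b} \<and>
        ((\<forall>c. min a b < c \<and> c < max a b \<longrightarrow> c \<in> S) \<or>
         (\<forall>c. min a b < c \<and> c < max a b \<longrightarrow> c \<notin> S)))"

end

theory Submission
  imports Defs
begin

definition subs :: "nat \<Rightarrow> nat \<Rightarrow> nat set set" where
  "subs m k = {A. A \<subseteq> {1..m} \<and> card A = k}"

lemma smc_sym: "strong_min_change S T \<Longrightarrow> strong_min_change T S"
  unfolding strong_min_change_def
proof (elim exE conjE)
  fix a b assume h: "a \<in> S" "b \<notin> S" "T = S - {a} \<union> {b}"
    "(\<forall>c. min a b < c \<and> c < max a b \<longrightarrow> c \<in> S) \<or> (\<forall>c. min a b < c \<and> c < max a b \<longrightarrow> c \<notin> S)"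
  have ab: "a \<noteq> b" using h by auto
  show "\<exists>a b. a \<in> T \<and> b \<notin> T \<and> S = T - {a} \<union> {b} \<and>
        ((\<forall>c. min a b < c \<and> c < max a b \<longrightarrow> c \<in> T) \<or> (\<forall>c. min a b < c \<and> c < max a b \<longrightarrow> c \<notin> T))"
    apply (rule exI[of _ b], rule exI[of _ a])
    using h ab by (auto simp: min_def max_def split: if_splits)
qed

lemma smc_insert:
  assumes "strong_min_change S T" "\<forall>x\<in>S \<union> T. x < M"
  shows "strong_min_change (insert M S) (insert M T)"
  using assms unfolding strong_min_change_def
proof (elim exE conjE)
  fix a b assume h: "a \<in> S" "b \<notin> S" "T = S - {a} \<union> {b}"
    "(\<forall>c. min a b < c \<and> c < max a b \<longrightarrow> c \<in> S) \<or> (\<forall>c. min a b < c \<and> c < max a b \<longrightarrow> c \<notin> S)"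
    and M: "\<forall>x\<in>S \<union> T. x < M"
  have aM: "a < M" "b < M" using h M by auto
  show "\<exists>a' b'. a' \<in> insert M S \<and> b' \<notin> insert M S \<and> insert M T = insert M S - {a'} \<union> {b'} \<and>
        ((\<forall>c. min a' b' < c \<and> c < max a' b' \<longrightarrow> c \<in> insert M S) \<or> (\<forall>c. min a' b' < c \<and> c < max a' b' \<longrightarrow> c \<notin> insert M S))"
    apply (rule exI[of _ a], rule exI[of _ b])
    using h aM by (auto simp: min_def max_def split: if_splits)
qed

lemma smc_compl:
  assumes "strong_min_change S T" "S \<subseteq> {1..u}" "T \<subseteq> {1..u}"
  shows "strong_min_change ({1..u} - S) ({1..u} - T)"
  using assms unfolding strong_min_change_def
proof (elim exE conjE)
  fix a b assume h: "a \<in> S" "b \<notin> S" "T = S - {a} \<union> {b}"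
    "(\<forall>c. min a b < c \<and> c < max a b \<longrightarrow> c \<in> S) \<or> (\<forall>c. min a b < c \<and> c < max a b \<longrightarrow> c \<notin> S)"
    and U: "S \<subseteq> {1..u}" "T \<subseteq> {1..u}"
  have abU: "a \<in> {1..u}" "b \<in> {1..u}" using h U by auto
  have btw: "\<And>c. min a b < c \<Longrightarrow> c < max a b \<Longrightarrow> c \<in> {1..u}" using abU by auto
  show "\<exists>a' b'. a' \<in> {1..u} - S \<and> b' \<notin> {1..u} - S \<and> {1..u} - T = ({1..u} - S) - {a'} \<union> {b'} \<and>
        ((\<forall>c. min a' b' < c \<and> c < max a' b' \<longrightarrow> c \<in> {1..u} - S) \<or> (\<forall>c. min a' b' < c \<and> c < max a' b' \<longrightarrow> c \<notin> {1..u} - S))"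
  proof (intro exI conjI)
    show "b \<in> {1..u} - S" using h abU by auto
    show "a \<notin> {1..u} - S" using h by auto
    show "{1..u} - T = ({1..u} - S) - {b} \<union> {a}" using h abU by auto
    have mm: "min b a = min a b" "max b a = max a b" by (auto simp: min_def max_def)
    show "(\<forall>c. min b a < c \<and> c < max b a \<longrightarrow> c \<in> {1..u} - S) \<or> (\<forall>c. min b a < c \<and> c < max b a \<longrightarrow> c \<notin> {1..u} - S)"
      unfolding mm using h(4) btw by blast
  qed
qed

lemma smc_intro_out:
  assumes "a \<in> S" "b \<notin> S" "T = S - {a} \<union> {b}" "\<And>c. min a b < c \<Longrightarrow> c < max a b \<Longrightarrow> c \<notin> S"
  shows "strong_min_change S T"
  using assms unfolding strong_min_change_def by blast

lemma subs_Suc: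
  assumes "0 < k"
  shows "subs (Suc m) k = insert (Suc m) ` subs m (k - 1) \<union> subs m k"
proof (rule set_eqI)
  fix A
  show "A \<in> subs (Suc m) k \<longleftrightarrow> A \<in> insert (Suc m) ` subs m (k - 1) \<union> subs m k"
  proof
    assume A: "A \<in> subs (Suc m) k"
    show "A \<in> insert (Suc m) ` subs m (k - 1) \<union> subs m k"
    proof (cases "Suc m \<in> A")
      case True
      have s1: "A - {Suc m} \<subseteq> {1..m}" using A by (force simp: subs_def subset_iff le_Suc_eq)
      have s2: "card (A - {Suc m}) = k - 1" using A True
        by (auto simp: subs_def intro: finite_subset)
      have s3: "A = insert (Suc m) (A - {Suc m})" using True by auto
      have "A \<in> insert (Suc m) ` subs m (k - 1)"
        by (rule image_eqI[of A "insert (Suc m)" "A - {Suc m}", OF s3]) (use s1 s2 in \<open>simp add: subs_def\<close>)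
      then show ?thesis by (rule UnI1)
    next
      case False
      then have "A \<subseteq> {1..m}" using A by (force simp: subs_def subset_iff le_Suc_eq)
      then show ?thesis using A by (auto simp: subs_def)
    qed
  next
    assume "A \<in> insert (Suc m) ` subs m (k - 1) \<union> subs m k"
    then show "A \<in> subs (Suc m) k"
    proof
      assume "A \<in> insert (Suc m) ` subs m (k - 1)"
      then obtain B where B: "B \<subseteq> {1..m}" "card B = k - 1" "A = insert (Suc m) B"
        by (auto simp: subs_def)
      have "finite B" using B(1) by (rule finite_subset) auto
      moreover have "Suc m \<notin> B" using B(1) by auto
      ultimately show ?thesis using B assms by (auto simp: subs_def)
    qed (auto simp: subs_def)
  qed
qed

lemma subs_full: "subs m m = {{1..m}}"
proof -
  have "\<And>A. A \<subseteq> {1..m} \<Longrightarrow> card A = m \<Longrightarrow> A = {1..m}"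
    by (metis card_atLeastAtMost card_subset_eq diff_Suc_1 finite_atLeastAtMost)
  then show ?thesis by (auto simp: subs_def)
qed

lemma combine:
  assumes k: "0 < k"
    and A: "set A = subs m (k - 1)" "distinct A" "successively strong_min_change A" "A \<noteq> []"
    and B: "set B = subs m k" "distinct B" "successively strong_min_change B" "B \<noteq> []"
    and J: "strong_min_change (insert (Suc m) (last A)) (hd B)"
  shows "set (map (insert (Suc m)) A @ B) = subs (Suc m) k"
        "distinct (map (insert (Suc m)) A @ B)"
        "successively strong_min_change (map (insert (Suc m)) A @ B)"
proof -
  show "set (map (insert (Suc m)) A @ B) = subs (Suc m) k"
    using A(1) B(1) subs_Suc[OF k] by simp
  have inj: "inj_on (insert (Suc m)) (set A)"
  proof (rule inj_onI)
    fix X Y assume "X \<in> set A" "Y \<in> set A" "insert (Suc m) X = insert (Suc m) Y"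
    moreover have "Suc m \<notin> X" "Suc m \<notin> Y" using A(1) calculation by (auto simp: subs_def)
    ultimately show "X = Y" by (metis insert_ident)
  qed
  have disj: "set (map (insert (Suc m)) A) \<inter> set B = {}"
    using B(1) by (auto simp: subs_def)
  show "distinct (map (insert (Suc m)) A @ B)"
    using inj disj A(2) B(2) by (simp add: distinct_map)
  have sA: "successively strong_min_change (map (insert (Suc m)) A)"
    unfolding successively_map
  proof (rule successively_mono[OF A(3)])
    fix x y assume "x \<in> set A" "y \<in> set A" "strong_min_change x y"
    moreover have "\<forall>z\<in>x \<union> y. z < Suc m" using A(1) calculation by (auto simp: subs_def)
    ultimately show "strong_min_change (insert (Suc m) x) (insert (Suc m) y)"
      using smc_insert by blast
  qed
  show "successively strong_min_change (map (insert (Suc m)) A @ B)"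
    unfolding successively_append_iff using sA B(3) J A(4) by (simp add: last_map)
qed


lemma subs_zero: "subs m 0 = {{}}"
  unfolding subs_def using finite_subset[of _ "{1..m}"] by auto

lemma junction:
  assumes "M \<notin> X" "b \<notin> X" "b < M" "\<And>c. b < c \<Longrightarrow> c < M \<Longrightarrow> c \<notin> X"
  shows "strong_min_change (insert M X) (insert b X)"
proof (rule smc_intro_out[of M _ b])
  show "insert b X = insert M X - {M} \<union> {b}" using assms by auto
qed (use assms in \<open>auto simp: min_def max_def\<close>)

fun G :: "nat \<Rightarrow> nat \<Rightarrow> nat \<Rightarrow> nat set list" where
  "G s 0 k = [{}]"
| "G s (Suc m) k = (if k = 0 then [{}] else if k = Suc m then [{1..Suc m}] else
     if s = 1 then (if k = m then map (insert (Suc m)) (G 1 m (k - 1)) @ [{1..m}]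
                    else map (insert (Suc m)) (G 2 m (k - 1)) @ rev (G 1 m k))
     else map (insert (Suc m)) (G 1 m (k - 1)) @ G (s - 1) m k)"

definition good :: "nat \<Rightarrow> nat \<Rightarrow> nat \<Rightarrow> nat set list \<Rightarrow> bool" where
  "good s m k L \<longleftrightarrow> L \<noteq> [] \<and> hd L = {m-k+1..m} \<and> last L = {m-k-s+1..m-s} \<and>
     set L = subs m k \<and> distinct L \<and> successively strong_min_change L"

lemma G_good: "k < m \<Longrightarrow> 1 \<le> s \<Longrightarrow> s + k \<le> m \<Longrightarrow> good s m k (G s m k)"
proof (induction m arbitrary: s k)
  case 0
  then show ?case by simp
next
  case (Suc m)
  show ?case
  proof (cases "k = 0")
    case True
    then show ?thesis by (simp add: good_def subs_zero)
  next
    case k0: False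
    show ?thesis
    proof (cases "s = 1")
      case s1: True
      show ?thesis
      proof (cases "k = m")
        case km: True
        have IH: "good 1 m (m - 1) (G 1 m (m - 1))" using Suc.IH[of "m - 1" 1] km k0 by simp
        let ?A = "G 1 m (m - 1)" and ?B = "[{1..m}]"
        have hA: "hd ?A = {2..m}" "last ?A = {1..m-1}" using IH km k0 unfolding good_def by auto
        have J: "strong_min_change (insert (Suc m) (last ?A)) (hd ?B)"
        proof -
          have "strong_min_change (insert (Suc m) {1..m-1}) (insert m {1..m-1})"
            by (rule junction) auto
          moreover have "insert m {1..m-1} = {1..m}" using km k0 by auto
          ultimately show ?thesis using hA by simp
        qed
        have c: "set (map (insert (Suc m)) ?A @ ?B) = subs (Suc m) k"
            "distinct (map (insert (Suc m)) ?A @ ?B)"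
            "successively strong_min_change (map (insert (Suc m)) ?A @ ?B)"
          using combine[of k ?A m ?B] k0 IH J km unfolding good_def by (auto simp: subs_full)
        have eq: "G s (Suc m) k = map (insert (Suc m)) ?A @ ?B" using s1 km k0 by simp
        have "hd (map (insert (Suc m)) ?A @ ?B) = {2..Suc m}" using hA IH km k0 unfolding good_def
          by (auto simp: hd_map)
        then show ?thesis unfolding good_def eq using c km s1 by simp
      next
        case km: False
        have IH1: "good 2 m (k - 1) (G 2 m (k - 1))" using Suc.IH[of "k - 1" 2] Suc.prems km k0 s1 by simp
        have IH2: "good 1 m k (G 1 m k)" using Suc.IH[of k 1] Suc.prems km k0 s1 by simp
        let ?A = "G 2 m (k - 1)" and ?B = "rev (G 1 m k)"
        have hA: "hd ?A = {m-k+2..m}" "last ?A = {m-k..m-2}" using IH1 k0 km Suc.prems unfolding good_def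
          by (auto simp: Suc_diff_le)
        have hB: "hd ?B = {m-k..m-1}" "last ?B = {m-k+1..m}" using IH2 k0 km Suc.prems unfolding good_def
          by (auto simp: hd_rev last_rev)
        have J: "strong_min_change (insert (Suc m) (last ?A)) (hd ?B)"
        proof -
          have "strong_min_change (insert (Suc m) {m-k..m-2}) (insert (m-1) {m-k..m-2})"
            by (rule junction) (use Suc.prems km k0 in auto)
          moreover have "insert (m-1) {m-k..m-2} = {m-k..m-1}" using Suc.prems km k0 by auto
          ultimately show ?thesis using hA hB by simp
        qed
        have c: "set (map (insert (Suc m)) ?A @ ?B) = subs (Suc m) k"
            "distinct (map (insert (Suc m)) ?A @ ?B)"
            "successively strong_min_change (map (insert (Suc m)) ?A @ ?B)"
        proof -
          have sB: "successively strong_min_change ?B"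
            using IH2 unfolding good_def by (auto intro: successively_mono smc_sym)
          have "set ?B = subs m k" "distinct ?B" "?B \<noteq> []" using IH2 unfolding good_def by auto
          then show "set (map (insert (Suc m)) ?A @ ?B) = subs (Suc m) k"
            "distinct (map (insert (Suc m)) ?A @ ?B)"
            "successively strong_min_change (map (insert (Suc m)) ?A @ ?B)"
            using combine[of k ?A m ?B] k0 IH1 sB J unfolding good_def by auto
        qed
        have eq: "G s (Suc m) k = map (insert (Suc m)) ?A @ ?B" using s1 km k0 Suc.prems by simp
        have "hd (map (insert (Suc m)) ?A @ ?B) = {Suc m - k + 1..Suc m}" using hA IH1 k0 Suc.prems unfolding good_def
          by (auto simp: hd_map)
        moreover have "last (map (insert (Suc m)) ?A @ ?B) = {Suc m - k - s + 1..Suc m - s}"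
          using hB s1 IH2 k0 unfolding good_def by auto
        ultimately show ?thesis unfolding good_def eq using c IH1 by (simp add: good_def)
      qed
    next
      case s1: False
      have IH1: "good 1 m (k - 1) (G 1 m (k - 1))" using Suc.IH[of "k - 1" 1] Suc.prems k0 s1 by simp
      have IH2: "good (s - 1) m k (G (s - 1) m k)" using Suc.IH[of k "s - 1"] Suc.prems k0 s1 by simp
      let ?A = "G 1 m (k - 1)" and ?B = "G (s - 1) m k"
      have hA: "hd ?A = {m-k+2..m}" "last ?A = {m-k+1..m-1}" using IH1 k0 Suc.prems unfolding good_def
        by (auto simp: Suc_diff_le)
      have hB: "hd ?B = {m-k+1..m}" "last ?B = {Suc m-k-s+1..Suc m-s}" using IH2 k0 s1 Suc.prems unfolding good_def
        by auto
      have J: "strong_min_change (insert (Suc m) (last ?A)) (hd ?B)"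
      proof -
        have "strong_min_change (insert (Suc m) {m-k+1..m-1}) (insert m {m-k+1..m-1})"
          by (rule junction) (use Suc.prems k0 in auto)
        moreover have "insert m {m-k+1..m-1} = {m-k+1..m}" using Suc.prems s1 k0 by auto
        ultimately show ?thesis using hA hB by simp
      qed
      have c: "set (map (insert (Suc m)) ?A @ ?B) = subs (Suc m) k"
          "distinct (map (insert (Suc m)) ?A @ ?B)"
          "successively strong_min_change (map (insert (Suc m)) ?A @ ?B)"
        using combine[of k ?A m ?B] k0 IH1 IH2 J unfolding good_def by auto
      have eq: "G s (Suc m) k = map (insert (Suc m)) ?A @ ?B" using s1 k0 Suc.prems by simp
      have "hd (map (insert (Suc m)) ?A @ ?B) = {Suc m - k + 1..Suc m}" using hA IH1 k0 Suc.prems unfolding good_def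
        by (auto simp: hd_map)
      moreover have "last (map (insert (Suc m)) ?A @ ?B) = {Suc m - k - s + 1..Suc m - s}"
        using hB IH2 unfolding good_def by auto
      ultimately show ?thesis unfolding good_def eq using c IH1 by (simp add: good_def)
    qed
  qed
qed


theorem theorem6:
  fixes n :: nat
  assumes "n \<ge> 1"
  defines "N \<equiv> (2 * n) choose n"
  shows "\<exists>S :: nat \<Rightarrow> nat set.
     bij_betw S {0..<N} {A. A \<subseteq> {1..2*n} \<and> card A = n} \<and>
     (\<forall>i < N div 2. S (i + N div 2) = {1..2*n} - S i) \<and>
     (\<forall>i < N. strong_min_change (S i) (S ((i + 1) mod N)))"
proof -
  define U where "U = {1..2*n}"
  define T where "T = subs (2*n) n"
  define P where "P = G n (2*n - 1) (n - 1)"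
  define P' where "P' = map (insert (2*n)) P"
  define L where "L = P' @ map (\<lambda>A. U - A) P'"
  have gP: "good n (2*n - 1) (n - 1) P" unfolding P_def by (rule G_good) (use assms in auto)
  have hdP: "hd P = {n+1..2*n-1}" and lastP: "last P = {1..n-1}" and setP: "set P = subs (2*n-1) (n-1)"
    and dP: "distinct P" and sP: "successively strong_min_change P" and neP: "P \<noteq> []"
    using gP assms unfolding good_def by auto
  have Suc2n: "Suc (2*n - 1) = 2*n" using assms by simp
  have T_eq: "T = insert (2*n) ` subs (2*n-1) (n-1) \<union> subs (2*n-1) n"
    unfolding T_def using subs_Suc[of n "2*n-1"] assms Suc2n by simp
  have setP': "set P' = insert (2*n) ` subs (2*n-1) (n-1)" unfolding P'_def using setP by simp
  have P'T: "set P' \<subseteq> T" using setP' T_eq by auto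
  have TU: "\<And>A. A \<in> T \<Longrightarrow> A \<subseteq> U" unfolding T_def U_def subs_def by auto
  have compT: "\<And>A. A \<in> T \<Longrightarrow> U - A \<in> T"
  proof -
    fix A assume A: "A \<in> T"
    then have "A \<subseteq> U" "card A = n" unfolding T_def U_def subs_def by auto
    then have "card (U - A) = n" unfolding U_def by (simp add: card_Diff_subset finite_subset)
    then show "U - A \<in> T" unfolding T_def U_def subs_def by auto
  qed
  have inP': "\<And>A. A \<in> set P' \<Longrightarrow> 2*n \<in> A" using setP' by auto
  have setL: "set L = T"
  proof
    show "set L \<subseteq> T" unfolding L_def using P'T compT by auto
    show "T \<subseteq> set L"
    proof
      fix A assume A: "A \<in> T"
      show "A \<in> set L"
      proof (cases "2*n \<in> A")
        case True
        then have "A \<notin> subs (2*n-1) n" unfolding subs_def using assms by auto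
        then have "A \<in> set P'" using A T_eq setP' by auto
        then show ?thesis unfolding L_def by auto
      next
        case False
        have "U - A \<in> T" using compT A by blast
        moreover have "2*n \<in> U - A" using False assms unfolding U_def by auto
        ultimately have "U - A \<notin> subs (2*n-1) n" unfolding subs_def using assms by auto
        then have "U - A \<in> set P'" using \<open>U - A \<in> T\<close> T_eq setP' by auto
        moreover have "A = U - (U - A)" using TU[OF A] by auto
        ultimately show ?thesis unfolding L_def by auto
      qed
    qed
  qed
  have dP': "distinct P'"
  proof -
    have "inj_on (insert (2*n)) (set P)"
    proof (rule inj_onI)
      fix X Y assume "X \<in> set P" "Y \<in> set P" "insert (2*n) X = insert (2*n) Y"
      moreover have "2*n \<notin> X" "2*n \<notin> Y" using setP calculation assms by (auto simp: subs_def)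
      ultimately show "X = Y" by (metis insert_ident)
    qed
    then show ?thesis unfolding P'_def using dP by (simp add: distinct_map)
  qed
  have dL: "distinct L"
  proof -
    have "inj_on (\<lambda>A. U - A) (set P')"
    proof (rule inj_onI)
      fix X Y assume "X \<in> set P'" "Y \<in> set P'" "U - X = U - Y"
      moreover have "X \<subseteq> U" "Y \<subseteq> U" using calculation P'T TU by auto
      ultimately show "X = Y" by blast
    qed
    moreover have "set P' \<inter> (\<lambda>A. U - A) ` set P' = {}" using inP' by auto
    ultimately show ?thesis unfolding L_def using dP' by (simp add: distinct_map)
  qed
  have cardT: "card T = N" unfolding T_def N_def subs_def using n_subsets[of "{1..2*n}" n] by simp
  have lenL: "length L = N" using distinct_card[OF dL] setL cardT by simp
  have lenL2: "length L = 2 * length P'" unfolding L_def by simp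
  have Nd: "N div 2 = length P'" using lenL lenL2 by simp
  have neP': "P' \<noteq> []" using neP unfolding P'_def by simp
  have hdP': "hd P' = insert (2*n) {n+1..2*n-1}" unfolding P'_def using neP hdP by (simp add: hd_map)
  have lastP': "last P' = insert (2*n) {1..n-1}" unfolding P'_def using neP lastP by (simp add: last_map)
  have J: "strong_min_change (last P') (U - hd P')"
  proof -
    have "strong_min_change (insert (2*n) {1..n-1}) (insert n {1..n-1})"
      by (rule junction) (use assms in auto)
    moreover have "U - hd P' = insert n {1..n-1}" unfolding hdP' U_def using assms by auto
    ultimately show ?thesis using lastP' by simp
  qed
  have hdU: "hd P' \<subseteq> U" using neP' P'T TU hd_in_set[OF neP'] by blast
  have lastU: "last P' \<subseteq> U" using neP' P'T TU last_in_set[OF neP'] by blast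
  have J2: "strong_min_change (U - last P') (hd P')"
  proof -
    have "strong_min_change (U - last P') (U - (U - hd P'))"
      unfolding U_def by (rule smc_compl) (use J lastU hdU U_def in auto)
    moreover have "U - (U - hd P') = hd P'" using hdU by auto
    ultimately show ?thesis by simp
  qed
  have sP': "successively strong_min_change P'"
    unfolding P'_def successively_map
  proof (rule successively_mono[OF sP])
    fix x y assume "x \<in> set P" "y \<in> set P" "strong_min_change x y"
    moreover have "x \<subseteq> {1..2*n-1}" "y \<subseteq> {1..2*n-1}" using setP calculation by (auto simp: subs_def)
    then have "\<forall>z\<in>x \<union> y. z < 2*n" using assms by force
    ultimately show "strong_min_change (insert (2*n) x) (insert (2*n) y)"
      using smc_insert by blast
  qed
  have sC: "successively strong_min_change (map (\<lambda>A. U - A) P')"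
    unfolding successively_map
  proof (rule successively_mono[OF sP'])
    fix x y assume "x \<in> set P'" "y \<in> set P'" "strong_min_change x y"
    moreover have "x \<subseteq> U" "y \<subseteq> U" using calculation P'T TU by auto
    ultimately show "strong_min_change (U - x) (U - y)" unfolding U_def by (intro smc_compl)
  qed
  have sL: "successively strong_min_change L"
    unfolding L_def successively_append_iff using sP' sC J neP' by (simp add: hd_map)
  show ?thesis
  proof (intro exI conjI allI impI)
    show "bij_betw ((!) L) {0..<N} {A. A \<subseteq> {1..2*n} \<and> card A = n}"
      by (rule bij_betw_nth[OF dL]) (use lenL setL in \<open>auto simp: T_def subs_def\<close>)
    fix i
    show "i < N div 2 \<Longrightarrow> L ! (i + N div 2) = {1..2*n} - L ! i"
      unfolding Nd L_def U_def by (simp add: nth_append)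
  next
    fix i assume i: "i < N"
    show "strong_min_change (L ! i) (L ! ((i + 1) mod N))"
    proof (cases "Suc i < N")
      case True
      then show ?thesis using successively_nth[OF sL, of i] lenL by simp
    next
      case False
      then have iN1: "i = N - 1" "Suc i = N" using i by auto
      then have iN: "i = N - 1" "(i + 1) mod N = 0" by auto
      have neL: "L \<noteq> []" using lenL i by auto
      have "L ! i = last L" using iN lenL last_conv_nth[OF neL] by simp
      also have "\<dots> = U - last P'" unfolding L_def using neP' by (simp add: last_map)
      finally have "L ! i = U - last P'" .
      moreover have "L ! 0 = hd P'" unfolding L_def using neP' by (simp add: hd_conv_nth nth_append)
      ultimately show ?thesis using J2 iN by simp
    qed
  qed
qed

end
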